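(* Assume $\operatorname{non}(\mathcal N)=\mathfrak c$. Then $\mathcal{ANM}_{\mathfrak c}\setminus\mathcal{ND}_{\mathfrak c}$ is strongly $\mathfrak c$-algebrable in $\left(\mathbb R^{[0,1]}\right)^{\mathfrak c}$.
   Context: For a regular infinite cardinal $\kappa$, a $\kappa$-sequence $(x_\alpha)_{\alpha<\kappa}$ converges to $x$ if for every neighbourhood $U$ of $x$ there is $\alpha_0<\kappa$ with $x_\alpha\in U$ for all $\alpha_0<\alpha<\kappa$; $\left(\mathbb R^{[0,1]}\right)^{\kappa}$ is the commutative real algebra of $\kappa$-sequences of functions $[0,1]\to\mathbb R$ with indexwise addition, multiplication and scalar multiplication. $\lambda$ is Lebesgue measure, $\mathcal N$ the null subsets of $[0,1]$, $\operatorname{non}(\mathcal N)$ the least cardinality of a non-null subset of $[0,1]$. $\mathcal{ANM}_{\kappa}$: $\kappa$-sequences of Lebesgue measurable $f_\alpha:[0,1]\to\mathbb R$ converging a.e. to a measurable $f$ but not converging in measure to $f$. $\mathcal{ND}_{\kappa}$: $\kappa$-sequences of Lebesgue measurable $f_\alpha:[0,1]\to\mathbb R$ dominated a.e. by a common integrable $g$, converging a.e. to an integrable $f$, with $\int|f_\alpha-f|\,d\lambda\not\to0$. $S$ is strongly $\mu$-algebrable if there is a set $X$ of $\mu$ algebraically independent elements such that every nonzero element of the (non-unital) algebra generated by $X$ belongs to $S$. *)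

theory Defs
  imports "HOL-Analysis.Analysis" "HOL-Library.Equipollence" "HOL-Library.Poly_Mapping"
begin

text \<open>Index set of continuum-sequences: the initial ordinal of the continuum,
  realised as the cardinal well-order on the reals.\<close>
definition cidx :: "real rel" where
  "cidx = card_of (UNIV :: real set)"

text \<open>Filter of tails of a well-order: x_alpha converges to x along it iff for every
  neighbourhood U there is alpha0 with x_alpha in U for all alpha0 < alpha.\<close>
definition tailF :: "'i rel \<Rightarrow> 'i filter" where
  "tailF r = (INF a\<in>Field r. principal {b. (a, b) \<in> r \<and> a \<noteq> b})"

abbreviation L01 :: "real measure" where
  "L01 \<equiv> lebesgue_on {0..1}"

text \<open>Sequences F alpha : [0,1] -> R; values outside [0,1] are irrelevant.\<close>
definition conv_in_measure :: "'i rel \<Rightarrow> ('i \<Rightarrow> real \<Rightarrow> real) \<Rightarrow> (real \<Rightarrow> real) \<Rightarrow> bool" where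
  "conv_in_measure r F f \<longleftrightarrow>
     (\<forall>e>0. ((\<lambda>a. measure L01 {x\<in>{0..1}. \<bar>F a x - f x\<bar> \<ge> e}) \<longlongrightarrow> 0) (tailF r))"

definition ANM :: "'i rel \<Rightarrow> ('i \<Rightarrow> real \<Rightarrow> real) set" where
  "ANM r = {F. (\<forall>a\<in>Field r. F a \<in> borel_measurable L01) \<and>
     (\<exists>f. f \<in> borel_measurable L01 \<and>
          (AE x in L01. ((\<lambda>a. F a x) \<longlongrightarrow> f x) (tailF r)) \<and>
          \<not> conv_in_measure r F f)}"

definition ND :: "'i rel \<Rightarrow> ('i \<Rightarrow> real \<Rightarrow> real) set" where
  "ND r = {F. (\<forall>a\<in>Field r. F a \<in> borel_measurable L01) \<and>
     (\<exists>g. integrable L01 g \<and> (\<forall>a\<in>Field r. AE x in L01. \<bar>F a x\<bar> \<le> g x)) \<and>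
     (\<exists>f. integrable L01 f \<and>
          (AE x in L01. ((\<lambda>a. F a x) \<longlongrightarrow> f x) (tailF r)) \<and>
          \<not> (((\<lambda>a. integral\<^sup>L L01 (\<lambda>x. \<bar>F a x - f x\<bar>)) \<longlongrightarrow> 0) (tailF r)))}"

text \<open>Carrier of the algebra (R^[0,1])^kappa: sequences of functions on [0,1],
  represented as functions vanishing outside [0,1].\<close>
definition seq_carrier :: "('i \<Rightarrow> real \<Rightarrow> real) set" where
  "seq_carrier = {F. \<forall>a t. t \<notin> {0..1} \<longrightarrow> F a t = 0}"

inductive_set gen_alg :: "('i \<Rightarrow> real \<Rightarrow> real) set \<Rightarrow> ('i \<Rightarrow> real \<Rightarrow> real) set"
  for X where
  gen_base: "F \<in> X \<Longrightarrow> F \<in> gen_alg X"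
| gen_add: "F \<in> gen_alg X \<Longrightarrow> G \<in> gen_alg X \<Longrightarrow> (\<lambda>a t. F a t + G a t) \<in> gen_alg X"
| gen_mult: "F \<in> gen_alg X \<Longrightarrow> G \<in> gen_alg X \<Longrightarrow> (\<lambda>a t. F a t * G a t) \<in> gen_alg X"
| gen_scale: "F \<in> gen_alg X \<Longrightarrow> (\<lambda>a t. c * F a t) \<in> gen_alg X"

definition mono_eval :: "(('i \<Rightarrow> real \<Rightarrow> real) \<Rightarrow>\<^sub>0 nat) \<Rightarrow> 'i \<Rightarrow> real \<Rightarrow> real" where
  "mono_eval m a t = (\<Prod>v\<in>Poly_Mapping.keys m. (v a t) ^ (Poly_Mapping.lookup m v))"

definition poly_eval ::
  "((('i \<Rightarrow> real \<Rightarrow> real) \<Rightarrow>\<^sub>0 nat) \<Rightarrow>\<^sub>0 real) \<Rightarrow> ('i \<Rightarrow> real \<Rightarrow> real)" where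
  "poly_eval P a t = (\<Sum>m\<in>Poly_Mapping.keys P. Poly_Mapping.lookup P m * mono_eval m a t)"

text \<open>Algebraic independence (in the non-unital sense): no nonzero polynomial without
  constant term in finitely many distinct elements of X vanishes on them.\<close>
definition alg_indep :: "('i \<Rightarrow> real \<Rightarrow> real) set \<Rightarrow> bool" where
  "alg_indep X \<longleftrightarrow> (\<forall>P. P \<noteq> 0 \<and> Poly_Mapping.lookup P 0 = 0 \<and> (\<forall>m\<in>Poly_Mapping.keys P. Poly_Mapping.keys m \<subseteq> X)
       \<longrightarrow> poly_eval P \<noteq> (\<lambda>a t. 0))"

definition strongly_algebrable :: "('i \<Rightarrow> real \<Rightarrow> real) set \<Rightarrow> 'c set \<Rightarrow> bool" where
  "strongly_algebrable S M \<longleftrightarrow> (\<exists>X. X \<subseteq> seq_carrier \<and> X \<approx> M \<and> alg_indep X \<and>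
       (\<forall>F\<in>gen_alg X. F \<noteq> (\<lambda>a t. 0) \<longrightarrow> F \<in> S))"

end

theory Submission
  imports Defs
begin



lemma times_self_lepoll:
  assumes "infinite (A::'a set)"
  shows "\<exists>p. inj_on p (A \<times> A) \<and> p ` (A \<times> A) \<subseteq> A"
proof -
  have "ordIso2 (card_of (A \<times> A)) (card_of A)" using card_of_Times_same_infinite assms by blast
  then obtain p where "bij_betw p (A \<times> A) A" using card_of_ordIso by blast
  then show ?thesis by (auto simp: bij_betw_def)
qed

fun encl :: "('a \<times> 'a \<Rightarrow> 'a) \<Rightarrow> 'a \<Rightarrow> 'a list \<Rightarrow> 'a" where
  "encl p z [] = z"
| "encl p z (x # xs) = p (x, encl p z xs)"

lemma encl_in: "z \<in> A \<Longrightarrow> p ` (A \<times> A) \<subseteq> A \<Longrightarrow> xs \<in> lists A \<Longrightarrow> encl p z xs \<in> A"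
  by (induction xs) auto

lemma encl_inj:
  assumes "z \<in> A" "p ` (A \<times> A) \<subseteq> A" "inj_on p (A \<times> A)"
  shows "xs \<in> lists A \<Longrightarrow> ys \<in> lists A \<Longrightarrow> length xs = length ys \<Longrightarrow> encl p z xs = encl p z ys \<Longrightarrow> xs = ys"
proof (induction xs arbitrary: ys)
  case Nil then show ?case by simp
next
  case (Cons x xs)
  then obtain y ys' where ys: "ys = y # ys'" by (cases ys) auto
  have "p (x, encl p z xs) = p (y, encl p z ys')" using Cons ys by simp
  moreover have "(x, encl p z xs) \<in> A \<times> A" "(y, encl p z ys') \<in> A \<times> A"
    using Cons ys encl_in[OF assms(1,2)] by auto
  ultimately have "x = y" "encl p z xs = encl p z ys'" using assms(3) unfolding inj_on_def by blast+
  then show ?case using Cons ys by auto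
qed

lemma lists_lepoll_infinite:
  assumes "infinite (A::'a set)"
  shows "lists A \<lesssim> A"
proof -
  obtain p where p: "inj_on p (A \<times> A)" "p ` (A \<times> A) \<subseteq> A" using times_self_lepoll assms by blast
  obtain e :: "nat \<Rightarrow> 'a" where e: "inj e" "range e \<subseteq> A" using infinite_countable_subset assms by blast
  define g where "g xs = p (e (length xs), encl p (e 0) xs)" for xs
  have z: "e 0 \<in> A" using e by auto
  have "inj_on g (lists A)"
  proof (rule inj_onI)
    fix xs ys assume xs: "xs \<in> lists A" and ys: "ys \<in> lists A" and eq: "g xs = g ys"
    have "(e (length xs), encl p (e 0) xs) \<in> A \<times> A" "(e (length ys), encl p (e 0) ys) \<in> A \<times> A"
      using e xs ys encl_in[OF z p(2)] by auto
    then have "e (length xs) = e (length ys)" "encl p (e 0) xs = encl p (e 0) ys"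
      using eq p(1) unfolding g_def inj_on_def by blast+
    then have "length xs = length ys" using e(1) by (simp add: inj_eq)
    then show "xs = ys" using encl_inj[OF z p(2) p(1) xs ys] \<open>encl p (e 0) xs = _\<close> by blast
  qed
  moreover have "g ` lists A \<subseteq> A"
    using e encl_in[OF z p(2)] p(2) unfolding g_def by blast
  ultimately show ?thesis unfolding lepoll_def by blast
qed




interpretation Q: vector_space "\<lambda>(q::rat) (x::real). of_rat q * x"
  by unfold_locales (auto simp: algebra_simps of_rat_add of_rat_mult)

lemma hamel:
  obtains B :: "real set" where "B \<subseteq> {0<..}" "(UNIV::real set) \<lesssim> B"
    "\<And>S u v. finite S \<Longrightarrow> S \<subseteq> B \<Longrightarrow> (\<Sum>v\<in>S. of_rat (u v) * v) = 0 \<Longrightarrow> v \<in> S \<Longrightarrow> u v = 0"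
proof -
  obtain B where B: "{} \<subseteq> B" "B \<subseteq> {0<..}" "Q.independent B" "{0<..} \<subseteq> Q.span B"
    using Q.maximal_independent_subset_extend[of "{}" "{0::real<..}"] Q.independent_empty by auto
  define F where "F xs = sum_list (map (\<lambda>(b,q). of_rat q * b) xs)" for xs :: "(real \<times> rat) list"
  have sp: "{0<..} \<subseteq> F ` lists (B \<times> UNIV)"
  proof
    fix y :: real assume "y \<in> {0<..}"
    then have "y \<in> Q.span B" using B(4) by blast
    then obtain t r where tr: "y = (\<Sum>a\<in>t. of_rat (r a) * a)" "finite t" "t \<subseteq> B"
      unfolding Q.span_explicit by blast
    obtain xs where xs: "set xs = t" "distinct xs" using finite_distinct_list[OF tr(2)] by blast
    have "F (map (\<lambda>a. (a, r a)) xs) = y"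
    proof -
      have "F (map (\<lambda>a. (a, r a)) xs) = sum_list (map (\<lambda>a. of_rat (r a) * a) xs)"
        unfolding F_def by (simp add: o_def)
      also have "\<dots> = (\<Sum>a\<in>t. of_rat (r a) * a)" using xs by (simp add: sum_list_distinct_conv_sum_set)
      finally show ?thesis using tr(1) by simp
    qed
    moreover have "map (\<lambda>a. (a, r a)) xs \<in> lists (B \<times> UNIV)" using xs tr by auto
    ultimately show "y \<in> F ` lists (B \<times> UNIV)" by blast
  qed
  have U1: "(UNIV::real set) \<lesssim> {0::real<..}"
  proof -
    have "inj (exp::real\<Rightarrow>real)" "range (exp::real\<Rightarrow>real) \<subseteq> {0<..}" by (auto simp: inj_on_def)
    then show ?thesis unfolding lepoll_def by (intro exI[of _ exp] conjI)
  qed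
  have U2: "(UNIV::real set) \<lesssim> lists (B \<times> (UNIV::rat set))"
  proof -
    have "{0::real<..} \<lesssim> lists (B \<times> (UNIV::rat set))"
      using lepoll_trans[OF subset_imp_lepoll[OF sp] image_lepoll] .
    then show ?thesis by (rule lepoll_trans[OF U1])
  qed
  have inf: "infinite B"
  proof
    assume "finite B"
    then have "countable (lists (B \<times> (UNIV::rat set)))" by (intro countable_lists countable_SIGMA) (auto intro: countable_finite)
    then have "countable (UNIV::real set)" using U2 by (rule countable_lepoll)
    then show False using uncountable_UNIV_real by blast
  qed
  have "(UNIV::rat set) \<lesssim> B"
  proof -
    have "(UNIV::rat set) \<lesssim> (UNIV::nat set)" unfolding lepoll_def
      by (intro exI[of _ to_nat]) auto
    then show ?thesis using inf[unfolded infinite_le_lepoll] by (rule lepoll_trans)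
  qed
  then have "B \<times> (UNIV::rat set) \<lesssim> B \<times> B" by (simp add: times_lepoll_mono)
  moreover have "B \<times> B \<lesssim> B" using times_self_lepoll[OF inf] unfolding lepoll_def by (elim exE) (intro exI)
  ultimately have "B \<times> (UNIV::rat set) \<lesssim> B" by (rule lepoll_trans)
  then have "lists (B \<times> (UNIV::rat set)) \<lesssim> B"
  proof -
    have "infinite (B \<times> (UNIV::rat set))" using inf by (auto simp: finite_cartesian_product_iff)
    then have "lists (B \<times> (UNIV::rat set)) \<lesssim> B \<times> (UNIV::rat set)" by (rule lists_lepoll_infinite)
    then show ?thesis using \<open>B \<times> (UNIV::rat set) \<lesssim> B\<close> by (rule lepoll_trans)
  qed
  then have "(UNIV::real set) \<lesssim> B" by (rule lepoll_trans[OF U2])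
  moreover have "\<And>S u v. finite S \<Longrightarrow> S \<subseteq> B \<Longrightarrow> (\<Sum>v\<in>S. of_rat (u v) * v) = 0 \<Longrightarrow> v \<in> S \<Longrightarrow> u v = 0"
    by (rule Q.independentD[OF B(3)])
  ultimately show ?thesis using that[OF B(2)] by simp
qed




definition Sg :: "real \<Rightarrow> real set" where "Sg a = {b. (b, a) \<in> cidx \<and> b \<noteq> a}"

lemma cidx_wo: "Well_order cidx" and cidx_field: "Field cidx = UNIV"
  unfolding cidx_def using card_of_Well_order[of "UNIV::real set"] Field_card_of[of "UNIV::real set"] by simp_all

lemma cidx_total: "(a, b) \<in> cidx \<or> (b, a) \<in> cidx"
proof -
  have "Refl cidx" "Total cidx" using cidx_wo unfolding well_order_on_def linear_order_on_def partial_order_on_def preorder_on_def by auto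
  then show ?thesis using cidx_field unfolding total_on_def refl_on_def by (cases "a = b") auto
qed

lemma cidx_trans: "(a, b) \<in> cidx \<Longrightarrow> (b, c) \<in> cidx \<Longrightarrow> (a, c) \<in> cidx"
  using cidx_wo unfolding well_order_on_def linear_order_on_def partial_order_on_def preorder_on_def trans_def by blast

lemma cidx_antisym: "(a, b) \<in> cidx \<Longrightarrow> (b, a) \<in> cidx \<Longrightarrow> a = b"
  using cidx_wo unfolding well_order_on_def linear_order_on_def partial_order_on_def antisym_def by blast

lemma Sg_small: "Sg a \<prec> (UNIV :: real set)"
proof -
  have "Sg a = underS cidx a" unfolding Sg_def underS_def by auto
  moreover have "ordLess2 (card_of (underS cidx a)) cidx"
    by (rule card_of_underS) (use card_of_Card_order[of "UNIV::real set"] Field_card_of[of "UNIV::real set"] in \<open>auto simp: cidx_def\<close>)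
  ultimately have "ordLess2 (card_of (Sg a)) (card_of (UNIV::real set))" by (simp add: cidx_def)
  then show ?thesis
    unfolding lesspoll_def lepoll_def eqpoll_iff_card_of_ordIso
    by (metis card_of_ordLeq not_ordLess_ordIso ordLess_imp_ordLeq)
qed

context
  assumes nonN: "\<forall>A. A \<subseteq> {0..1::real} \<and> A \<prec> (UNIV :: real set) \<longrightarrow> A \<in> null_sets lebesgue"
begin

lemma sets_lebesgue_Icc: "{a..b::real} \<in> sets lebesgue" by simp

lemma Sg_null: "Sg a \<inter> {0..1} \<in> null_sets lebesgue"
proof -
  have "Sg a \<inter> {0..1} \<lesssim> Sg a" by (rule subset_imp_lepoll) auto
  then have "Sg a \<inter> {0..1} \<prec> (UNIV::real set)" using Sg_small by (rule lesspoll_trans1)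
  then show ?thesis using nonN by blast
qed

lemma tail_nonempty: "\<exists>b. (a, b) \<in> cidx \<and> a \<noteq> b"
proof (rule ccontr)
  assume "\<not> ?thesis"
  then have "\<forall>b. b \<noteq> a \<longrightarrow> b \<in> Sg a" using cidx_total unfolding Sg_def by blast
  then have "{0..1} \<subseteq> (Sg a \<inter> {0..1}) \<union> {a}" by auto
  moreover have "(Sg a \<inter> {0..1}) \<union> {a} \<in> null_sets lebesgue"
    using Sg_null by (auto intro!: null_sets.Un)
  ultimately have "{0..1::real} \<in> null_sets lebesgue"
    by (meson null_sets_subset sets_lebesgue_Icc)
  then show False by (simp add: null_sets_def)
qed

lemma tailF_not_bot: "tailF cidx \<noteq> bot"
proof
  assume "tailF cidx = bot"
  then have "eventually (\<lambda>_. False) (tailF cidx)" by simp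
  moreover have "eventually P (tailF cidx) \<longleftrightarrow> (\<exists>b\<in>Field cidx. eventually P (principal {c. (b, c) \<in> cidx \<and> b \<noteq> c}))" for P
    unfolding tailF_def
  proof (rule eventually_INF_base)
    show "Field cidx \<noteq> {}" using cidx_field by simp
    fix a b assume "a \<in> Field cidx" "b \<in> Field cidx"
    show "\<exists>x\<in>Field cidx. principal {c. (x, c) \<in> cidx \<and> x \<noteq> c} \<le>
      inf (principal {c. (a, c) \<in> cidx \<and> a \<noteq> c}) (principal {c. (b, c) \<in> cidx \<and> b \<noteq> c})"
    proof (cases "(a, b) \<in> cidx")
      case True
      then show ?thesis using cidx_field
        by (intro bexI[of _ b]) (auto dest: cidx_trans cidx_antisym)
    next
      case False
      then have "(b, a) \<in> cidx" using cidx_total by blast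
      then show ?thesis using cidx_field
        by (intro bexI[of _ a]) (auto dest: cidx_trans cidx_antisym)
    qed
  qed
  ultimately obtain b where "eventually (\<lambda>_. False) (principal {c. (b, c) \<in> cidx \<and> b \<noteq> c})" by blast
  then show False using tail_nonempty[of b] by (auto simp: eventually_principal)
qed

end

lemma tailF_eventually: "(\<And>b. (a, b) \<in> cidx \<Longrightarrow> a \<noteq> b \<Longrightarrow> P b) \<Longrightarrow> eventually P (tailF cidx)"
  unfolding tailF_def
  by (rule eventually_INF1[of a]) (auto simp: cidx_field eventually_principal)




lemma exp_ge_self: "x \<le> exp (x::real)"
  using exp_ge_add_one_self[of x] by linarith

lemma lead:
  fixes C :: "real \<Rightarrow> real"
  assumes K: "finite K" "K \<subseteq> {0<..}" and nz: "\<exists>s\<in>K. C s \<noteq> 0"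
  shows "\<exists>\<kappa>>0. \<exists>Y>0. \<forall>y\<ge>Y. \<kappa> * y \<le> \<bar>\<Sum>s\<in>K. C s * exp (s * y)\<bar>"
proof -
  define K' where "K' = {s\<in>K. C s \<noteq> 0}"
  have K': "finite K'" "K' \<noteq> {}" "K' \<subseteq> K" using K nz unfolding K'_def by auto
  define m where "m = Max K'"
  have m: "m \<in> K'" "\<And>s. s \<in> K' \<Longrightarrow> s \<le> m" using K' unfolding m_def by auto
  have mpos: "m > 0" "C m \<noteq> 0" using m K K' unfolding K'_def by auto
  have sumK: "(\<Sum>s\<in>K. C s * exp (s * y)) = (\<Sum>s\<in>K'. C s * exp (s * y))" for y
    by (rule sum.mono_neutral_right) (use K K'_def in auto)
  define g where "g y = (\<Sum>s\<in>K'. C s * exp ((s - m) * y))" for y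
  have split: "(\<Sum>s\<in>K'. C s * exp (s * y)) = exp (m * y) * g y" for y
    unfolding g_def sum_distrib_left
    by (rule sum.cong) (auto simp: exp_add[symmetric] algebra_simps)
  have "(g \<longlongrightarrow> (\<Sum>s\<in>K'. if s = m then C s else 0)) at_top"
    unfolding g_def
  proof (rule tendsto_sum)
    fix s assume s: "s \<in> K'"
    show "((\<lambda>y. C s * exp ((s - m) * y)) \<longlongrightarrow> (if s = m then C s else 0)) at_top"
    proof (cases "s = m")
      case True then show ?thesis by simp
    next
      case False
      then have "s - m < 0" using m(2)[OF s] by simp
      then have "filterlim (\<lambda>y. (s - m) * y) at_bot at_top"
        by (intro filterlim_tendsto_neg_mult_at_bot[OF tendsto_const]) (auto intro: filterlim_ident)
      then have "((\<lambda>y. exp ((s - m) * y)) \<longlongrightarrow> 0) at_top"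
        using exp_at_bot filterlim_compose by blast
      then show ?thesis using False by (auto intro: tendsto_mult_right_zero)
    qed
  qed
  also have "(\<Sum>s\<in>K'. if s = m then C s else 0) = C m" using m K' by simp
  finally have gl: "(g \<longlongrightarrow> C m) at_top" .
  have "\<bar>C m\<bar> / 2 < \<bar>C m\<bar>" using mpos by simp
  then have "eventually (\<lambda>y. \<bar>C m\<bar> / 2 < norm (g y)) at_top"
    using tendsto_norm[OF gl] order_tendstoD(1) by fastforce
  then obtain Y0 where Y0: "\<And>y. y \<ge> Y0 \<Longrightarrow> \<bar>C m\<bar> / 2 < \<bar>g y\<bar>"
    by (auto simp: eventually_at_top_linorder)
  define Y where "Y = max Y0 1"
  show ?thesis
  proof (intro exI conjI allI impI)
    show "\<bar>C m\<bar> / 2 * m > 0" using mpos by simp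
    show "Y > 0" unfolding Y_def by simp
    fix y assume y: "Y \<le> y"
    then have y0: "y \<ge> Y0" "y \<ge> 1" unfolding Y_def by auto
    have "\<bar>C m\<bar> / 2 * m * y = (\<bar>C m\<bar> / 2) * (m * y)" by simp
    also have "\<dots> \<le> \<bar>g y\<bar> * exp (m * y)"
      using Y0[OF y0(1)] exp_ge_self[of "m*y"] mpos y0
      by (intro mult_mono) auto
    also have "\<dots> = \<bar>\<Sum>s\<in>K. C s * exp (s * y)\<bar>"
      unfolding sumK split by (simp add: abs_mult)
    finally show "\<bar>C m\<bar> / 2 * m * y \<le> \<bar>\<Sum>s\<in>K. C s * exp (s * y)\<bar>" .
  qed
qed

definition Esum :: "(real \<times> real) list \<Rightarrow> real \<Rightarrow> real" where
  "Esum xs y = sum_list (map (\<lambda>(c, s). c * exp (s * y)) xs)"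

definition Cf :: "(real \<times> real) list \<Rightarrow> real \<Rightarrow> real" where
  "Cf xs s = sum_list (map (\<lambda>(c, s'). if s' = s then c else 0) xs)"

lemma Esum_simps [simp]: "Esum [] y = 0" "Esum ((c, s) # xs) y = c * exp (s * y) + Esum xs y"
  "Esum (xs @ ys) y = Esum xs y + Esum ys y"
  by (simp_all add: Esum_def)

lemma Cf_out: "s \<notin> snd ` set xs \<Longrightarrow> Cf xs s = 0"
  by (induction xs) (auto simp: Cf_def)

lemma Esum_group: "finite K \<Longrightarrow> snd ` set xs \<subseteq> K \<Longrightarrow> Esum xs y = (\<Sum>s\<in>K. Cf xs s * exp (s * y))"
proof (induction xs)
  case Nil then show ?case by (simp add: Cf_def)
next
  case (Cons p xs)
  obtain c s0 where p: "p = (c, s0)" by (cases p)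
  have cf: "Cf (p # xs) s = (if s0 = s then c else 0) + Cf xs s" for s
    unfolding Cf_def p by simp
  have "(\<Sum>s\<in>K. Cf (p # xs) s * exp (s * y)) =
      (\<Sum>s\<in>K. (if s0 = s then c * exp (s * y) else 0)) + (\<Sum>s\<in>K. Cf xs s * exp (s * y))"
    unfolding cf sum.distrib[symmetric] by (rule sum.cong) (auto simp: algebra_simps)
  also have "(\<Sum>s\<in>K. (if s0 = s then c * exp (s * y) else 0)) = c * exp (s0 * y)"
    using Cons.prems p by (simp add: sum.delta)
  finally show ?case using Cons p by simp
qed

lemma Esum_dich:
  assumes "\<forall>p\<in>set xs. snd p > 0"
  shows "(\<forall>y. Esum xs y = 0) \<or> (\<exists>\<kappa>>0. \<exists>Y>0. \<forall>y\<ge>Y. \<kappa> * y \<le> \<bar>Esum xs y\<bar>)"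
proof (cases "\<forall>s. Cf xs s = 0")
  case True
  then show ?thesis using Esum_group[of "snd ` set xs" xs] by simp
next
  case False
  then obtain s where s: "Cf xs s \<noteq> 0" by blast
  then have "s \<in> snd ` set xs" using Cf_out by blast
  then have "\<exists>\<kappa>>0. \<exists>Y>0. \<forall>y\<ge>Y. \<kappa> * y \<le> \<bar>\<Sum>s\<in>snd ` set xs. Cf xs s * exp (s * y)\<bar>"
    using s assms by (intro lead) auto
  then show ?thesis using Esum_group[of "snd ` set xs" xs] by simp
qed




lemma NI:
  assumes k: "\<kappa> > 0" and d: "0 < \<delta>" "\<delta> \<le> 1"
  shows "\<not> integrable (lebesgue_on {0..1}) (\<lambda>x::real. indicator {0<..\<delta>} x * (\<kappa> / x))"
proof
  define h where "h x = indicator {0<..\<delta>} x * (\<kappa> / x)" for x :: real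
  assume "integrable (lebesgue_on {0..1}) (\<lambda>x::real. indicator {0<..\<delta>} x * (\<kappa> / x))"
  then have "integrable lebesgue (\<lambda>x. indicator {0..1} x *\<^sub>R h x)"
    unfolding h_def by (subst integrable_restrict_space[symmetric]) auto
  then have "h absolutely_integrable_on {0..1}" by (simp add: set_integrable_def)
  then have hi: "h integrable_on {0..1}" using absolutely_integrable_on_def by blast
  have h0: "\<forall>x\<in>{0..1}. 0 \<le> h x" unfolding h_def using k by (auto simp: indicator_def)
  define I where "I = integral {0..1} h"
  define \<epsilon> where "\<epsilon> = \<delta> * exp (- (I / \<kappa>) - 1)"
  have I0: "0 \<le> I" unfolding I_def using h0 hi by (intro integral_nonneg) auto
  have "0 \<le> I / \<kappa>" using I0 k by simp
  then have "exp (- (I / \<kappa>) - 1) \<le> 1" by simp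
  then have e: "0 < \<epsilon>" "\<epsilon> \<le> \<delta>" unfolding \<epsilon>_def using d by (auto simp: mult_le_cancel_left1)
  have sub: "{\<epsilon>..\<delta>} \<subseteq> {0..1}" using e d by auto
  have hi2: "h integrable_on {\<epsilon>..\<delta>}" using integrable_on_subinterval[OF hi sub] .
  have le: "integral {\<epsilon>..\<delta>} h \<le> I"
    unfolding I_def using integral_subset_le[OF sub hi2 hi h0] .
  have "((\<lambda>x. \<kappa> / x) has_integral (\<kappa> * ln \<delta> - \<kappa> * ln \<epsilon>)) {\<epsilon>..\<delta>}"
  proof (rule fundamental_theorem_of_calculus[OF e(2)])
    fix x assume "x \<in> {\<epsilon>..\<delta>}"
    then have "x > 0" using e by auto
    then have "((\<lambda>x. \<kappa> * ln x) has_real_derivative \<kappa> / x) (at x within {\<epsilon>..\<delta>})"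
      by (auto intro!: derivative_eq_intros)
    then show "((\<lambda>x. \<kappa> * ln x) has_vector_derivative \<kappa> / x) (at x within {\<epsilon>..\<delta>})"
      by (simp add: has_real_derivative_iff_has_vector_derivative)
  qed
  moreover have "\<And>x. x \<in> {\<epsilon>..\<delta>} \<Longrightarrow> h x = \<kappa> / x" unfolding h_def using e by auto
  ultimately have "(h has_integral (\<kappa> * ln \<delta> - \<kappa> * ln \<epsilon>)) {\<epsilon>..\<delta>}"
    using has_integral_spike_finite_eq[of "{}"] by (metis has_integral_cong)
  then have "integral {\<epsilon>..\<delta>} h = \<kappa> * ln \<delta> - \<kappa> * ln \<epsilon>" by (rule integral_unique)
  also have "ln \<epsilon> = ln \<delta> - I / \<kappa> - 1" unfolding \<epsilon>_def using d by (simp add: ln_mult)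
  finally have "integral {\<epsilon>..\<delta>} h = I + \<kappa>" using k by (simp add: algebra_simps)
  then show False using le k by simp
qed




lemma Sg_sets: "{0..1} - Sg a \<in> sets lebesgue" if nonN: "\<forall>A. A \<subseteq> {0..1::real} \<and> A \<prec> (UNIV :: real set) \<longrightarrow> A \<in> null_sets lebesgue"
proof -
  have "{0..1} - Sg a = {0..1} - (Sg a \<inter> {0..1})" by auto
  then show ?thesis using Sg_null[OF nonN, of a] by auto
qed

lemma bor_leb: "f \<in> borel_measurable borel \<Longrightarrow> f \<in> borel_measurable lebesgue"
  by (rule measurable_completion) simp

lemma div_meas: "(\<lambda>x::real. \<kappa> / x) \<in> borel_measurable borel"
  by (intro borel_measurable_divide) auto

lemma mainM:
  assumes nonN: "\<forall>A. A \<subseteq> {0..1::real} \<and> A \<prec> (UNIV :: real set) \<longrightarrow> A \<in> null_sets lebesgue"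
    and q: "q \<in> borel_measurable lebesgue"
    and k: "\<kappa> > 0" and d: "0 < \<delta>" "\<delta> \<le> 1" and big: "\<And>t. t \<in> {0<..\<delta>} \<Longrightarrow> \<kappa> / t \<le> \<bar>q t\<bar>"
    and F: "F = (\<lambda>a t. if t \<in> {0..1} \<and> t \<notin> Sg a then q t else 0)"
  shows "F \<in> ANM cidx - ND cidx"
proof -
  have Fi: "F a = (\<lambda>t. indicator ({0..1} - Sg a) t * q t)" for a
    unfolding F by (auto simp: indicator_def)
  have measL: "F a \<in> borel_measurable lebesgue" for a
    unfolding Fi using Sg_sets[OF nonN] q by (intro borel_measurable_times borel_measurable_indicator) auto
  have meas: "F a \<in> borel_measurable L01" for a
    by (rule measurable_restrict_space1[OF measL])
  have conv: "((\<lambda>a. F a x) \<longlongrightarrow> 0) (tailF cidx)" for x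
  proof (rule tendsto_eventually)
    show "eventually (\<lambda>a. F a x = 0) (tailF cidx)"
      by (rule tailF_eventually[of x]) (auto simp: F Sg_def)
  qed
  have bigF: "\<kappa> / t \<le> \<bar>F a t\<bar>" if "t \<in> {0<..\<delta>}" "t \<notin> Sg a" for a t
    using big[OF that(1)] that d unfolding F by auto
  have notcm: "\<not> conv_in_measure cidx F (\<lambda>t. 0)"
  proof
    assume cm: "conv_in_measure cidx F (\<lambda>t. 0)"
    define m where "m a = measure L01 {x\<in>{0..1}. \<kappa> \<le> \<bar>F a x - 0\<bar>}" for a
    have lim: "(m \<longlongrightarrow> 0) (tailF cidx)" using cm k unfolding conv_in_measure_def m_def by auto
    have mge: "\<delta> \<le> m a" for a
    proof -
      define D where "D = {0<..\<delta>} - (Sg a \<inter> {0..1})"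
      define A where "A = {x\<in>{0..1}. \<kappa> \<le> \<bar>F a x - 0\<bar>}"
      have DA: "D \<subseteq> A"
      proof
        fix x assume "x \<in> D"
        then have x: "x \<in> {0<..\<delta>}" "x \<notin> Sg a" "x \<le> 1" using d unfolding D_def by auto
        have "\<kappa> \<le> \<kappa> / x" using x k by (simp add: le_divide_eq)
        then show "x \<in> A" using bigF[OF x(1,2)] x unfolding A_def by auto
      qed
      have Dsets: "D \<in> sets lebesgue" unfolding D_def using Sg_null[OF nonN, of a] by auto
      have "measure lebesgue D = measure lebesgue {0<..\<delta>}"
        unfolding D_def by (rule measure_Diff_null_set) (use Sg_null[OF nonN, of a] in auto)
      also have "\<dots> = \<delta>" using d by (simp add: measure_def)
      finally have mD: "measure L01 D = \<delta>"
        using d by (subst measure_restrict_space) (auto simp: D_def)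
      have Asets: "A \<in> sets L01"
      proof -
        have "(\<lambda>x. \<bar>F a x - 0\<bar>) \<in> borel_measurable L01" using meas by measurable
        then have "(\<lambda>x. \<bar>F a x - 0\<bar>) -` {\<kappa>..} \<inter> space L01 \<in> sets L01"
          by (rule measurable_sets) simp
        moreover have "(\<lambda>x. \<bar>F a x - 0\<bar>) -` {\<kappa>..} \<inter> space L01 = A" unfolding A_def by auto
        ultimately show ?thesis by simp
      qed
      have "finite_measure L01" by (rule finite_measure_lebesgue_on) simp
      then have "measure L01 D \<le> measure L01 A"
        using DA Asets by (intro finite_measure.finite_measure_mono) auto
      then show ?thesis using mD unfolding m_def A_def by simp
    qed
    have "eventually (\<lambda>a. m a < \<delta>) (tailF cidx)" using lim d order_tendstoD(2) by blast
    then have "eventually (\<lambda>a. False) (tailF cidx)" by (rule eventually_mono) (metis mge not_less)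
    then show False using tailF_not_bot[OF nonN] by (simp add: eventually_False)
  qed
  have anm: "F \<in> ANM cidx"
    unfolding ANM_def using meas conv notcm by (auto intro!: exI[of _ "\<lambda>t. 0"])
  have notnd: "F \<notin> ND cidx"
  proof
    assume "F \<in> ND cidx"
    then obtain g where g: "integrable L01 g" "\<And>a. AE x in L01. \<bar>F a x\<bar> \<le> g x"
      unfolding ND_def using cidx_field by auto
    define h where "h x = indicator {0<..\<delta>} x * (\<kappa> / x)" for x :: real
    have hm: "h \<in> borel_measurable L01"
      unfolding h_def by (intro measurable_restrict_space1 borel_measurable_times bor_leb div_meas) auto
    have "AE x in lebesgue. x \<notin> Sg 0 \<inter> {0..1}" using Sg_null[OF nonN, of 0] by (rule AE_not_in)
    then have "AE x in L01. x \<notin> Sg 0"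
      by (subst AE_restrict_space_iff) (auto elim!: eventually_mono)
    then have "AE x in L01. norm (h x) \<le> norm (g x)"
      using g(2)[of 0]
    proof eventually_elim
      case (elim x)
      show ?case
      proof (cases "x \<in> {0<..\<delta>}")
        case True
        then have "h x = \<kappa> / x" "\<kappa> / x \<ge> 0" unfolding h_def using k by auto
        then show ?thesis using bigF[OF True elim(1)] elim(2) by auto
      next
        case False
        then show ?thesis unfolding h_def by auto
      qed
    qed
    then have "integrable L01 h" using Bochner_Integration.integrable_bound[OF g(1) hm] by blast
    then show False using NI[OF k d] unfolding h_def by blast
  qed
  show ?thesis using anm notnd by blast
qed




definition Gf :: "real \<Rightarrow> real \<Rightarrow> real \<Rightarrow> real" where
  "Gf b = (\<lambda>a t. if t \<in> {0..1} \<and> t \<notin> Sg a then exp (b * inverse t) else 0)"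

definition prodl :: "(real \<times> real) list \<Rightarrow> (real \<times> real) list \<Rightarrow> (real \<times> real) list" where
  "prodl xs ys = concat (map (\<lambda>(c, s). map (\<lambda>(c', s'). (c * c', s + s')) ys) xs)"

lemma Esum_map1: "Esum (map (\<lambda>(c', s'). (c * c', s + s')) ys) y = c * exp (s * y) * Esum ys y"
  by (induction ys) (auto simp: algebra_simps exp_add)

lemma Esum_prodl: "Esum (prodl xs ys) y = Esum xs y * Esum ys y"
  unfolding prodl_def
  by (induction xs) (auto simp: Esum_map1 algebra_simps Esum_def[of "concat _"] Esum_def[of "_ @ _"])

lemma Esum_scale: "Esum (map (\<lambda>(c, s). (k * c, s)) xs) y = k * Esum xs y"
  by (induction xs) (auto simp: algebra_simps)

lemma gen_form:
  assumes "F \<in> gen_alg (Gf ` B)" "B \<subseteq> {0<..}"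
  shows "\<exists>xs. (\<forall>p\<in>set xs. snd p > 0) \<and> F = (\<lambda>a t. if t \<in> {0..1} \<and> t \<notin> Sg a then Esum xs (inverse t) else 0)"
  using assms(1)
proof induction
  case (gen_base F)
  then obtain b where b: "b \<in> B" "F = Gf b" by blast
  have e: "Esum [(1, b)] y = exp (b * y)" for y by (simp add: Esum_def)
  show ?case using assms(2) b
    by (intro exI[of _ "[(1, b)]"]) (auto intro!: ext simp: Gf_def e)
next
  case (gen_add F G)
  then obtain xs ys where "\<forall>p\<in>set xs. snd p > 0" "F = (\<lambda>a t. if t \<in> {0..1} \<and> t \<notin> Sg a then Esum xs (inverse t) else 0)"
    "\<forall>p\<in>set ys. snd p > 0" "G = (\<lambda>a t. if t \<in> {0..1} \<and> t \<notin> Sg a then Esum ys (inverse t) else 0)" by blast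
  then show ?case by (intro exI[of _ "xs @ ys"]) (auto intro!: ext)
next
  case (gen_mult F G)
  then obtain xs ys where xs: "\<forall>p\<in>set xs. snd p > 0" "F = (\<lambda>a t. if t \<in> {0..1} \<and> t \<notin> Sg a then Esum xs (inverse t) else 0)"
    and ys: "\<forall>p\<in>set ys. snd p > 0" "G = (\<lambda>a t. if t \<in> {0..1} \<and> t \<notin> Sg a then Esum ys (inverse t) else 0)" by blast
  have "\<forall>p\<in>set (prodl xs ys). snd p > 0" using xs(1) ys(1) unfolding prodl_def by fastforce
  then show ?case using xs ys by (intro exI[of _ "prodl xs ys"]) (auto intro!: ext simp: Esum_prodl)
next
  case (gen_scale F c)
  then obtain xs where xs: "\<forall>p\<in>set xs. snd p > 0" "F = (\<lambda>a t. if t \<in> {0..1} \<and> t \<notin> Sg a then Esum xs (inverse t) else 0)" by blast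
  have "\<forall>p\<in>set (map (\<lambda>(c', s). (c * c', s)) xs). snd p > 0" using xs(1) by auto
  then show ?case using xs by (intro exI[of _ "map (\<lambda>(c', s). (c * c', s)) xs"]) (auto intro!: ext simp: Esum_scale)
qed

lemma Esum_meas: "(\<lambda>t. Esum xs (inverse t)) \<in> borel_measurable borel"
proof (induction xs)
  case Nil then show ?case by simp
next
  case (Cons p xs)
  obtain c s where p: "p = (c, s)" by (cases p)
  have "(\<lambda>t::real. c * exp (s * inverse t)) \<in> borel_measurable borel"
    by (intro borel_measurable_times borel_measurable_exp borel_measurable_inverse) auto
  then show ?case using Cons p by (simp add: borel_measurable_add)
qed




lemma Gf_eval: "t \<in> {0..1} \<Longrightarrow> t \<notin> Sg a \<Longrightarrow> Gf b a t = exp (b * inverse t)"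
  by (simp add: Gf_def)

lemma Gf_inj: "inj Gf"
proof (rule injI)
  fix x y assume "Gf x = Gf y"
  then have "Gf x 1 1 = Gf y 1 1" by simp
  then show "x = y" by (simp add: Gf_def Sg_def)
qed

definition sig :: "((real \<Rightarrow> real \<Rightarrow> real) \<Rightarrow>\<^sub>0 nat) \<Rightarrow> real" where
  "sig m = (\<Sum>v\<in>Poly_Mapping.keys m. of_nat (Poly_Mapping.lookup m v) * inv Gf v)"

lemma mono_G:
  assumes "Poly_Mapping.keys m \<subseteq> range Gf" "t \<in> {0..1}" "t \<notin> Sg a"
  shows "mono_eval m a t = exp (sig m * inverse t)"
proof -
  have "mono_eval m a t = (\<Prod>v\<in>Poly_Mapping.keys m. exp (of_nat (Poly_Mapping.lookup m v) * (inv Gf v * inverse t)))"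
    unfolding mono_eval_def
  proof (rule prod.cong[OF refl])
    fix v assume "v \<in> Poly_Mapping.keys m"
    then have "v = Gf (inv Gf v)" using assms(1) by (simp add: f_inv_into_f subset_iff)
    then have "v a t = exp (inv Gf v * inverse t)" using Gf_eval[OF assms(2,3)] by metis
    then show "v a t ^ Poly_Mapping.lookup m v = exp (of_nat (Poly_Mapping.lookup m v) * (inv Gf v * inverse t))"
      by (simp add: exp_of_nat_mult)
  qed
  also have "\<dots> = exp (\<Sum>v\<in>Poly_Mapping.keys m. of_nat (Poly_Mapping.lookup m v) * (inv Gf v * inverse t))"
    by (simp add: exp_sum)
  also have "(\<Sum>v\<in>Poly_Mapping.keys m. of_nat (Poly_Mapping.lookup m v) * (inv Gf v * inverse t)) = sig m * inverse t"
    unfolding sig_def sum_distrib_right by (simp add: algebra_simps)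
  finally show ?thesis .
qed

lemma sig_pos:
  assumes "Poly_Mapping.keys m \<subseteq> Gf ` B" "B \<subseteq> {0<..}" "m \<noteq> 0"
  shows "sig m > 0"
  unfolding sig_def
proof (rule sum_pos)
  show "finite (Poly_Mapping.keys m)" by simp
  show "Poly_Mapping.keys m \<noteq> {}" using assms(3) by simp
  fix v assume v: "v \<in> Poly_Mapping.keys m"
  then obtain b where b: "b \<in> B" "v = Gf b" using assms(1) by blast
  then have "inv Gf v = b" using Gf_inj by (simp add: inv_f_f)
  then have "inv Gf v > 0" using b assms(2) by auto
  moreover have "Poly_Mapping.lookup m v > 0" using v by (simp add: in_keys_iff)
  ultimately show "of_nat (Poly_Mapping.lookup m v) * inv Gf v > 0" by simp
qed

lemma sig_inj:
  assumes ind: "\<forall>S u. finite S \<longrightarrow> S \<subseteq> B \<longrightarrow> (\<Sum>v\<in>S. of_rat (u v) * v) = 0 \<longrightarrow> (\<forall>v\<in>S. u v = 0)"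
    and m1: "Poly_Mapping.keys m1 \<subseteq> Gf ` B" and m2: "Poly_Mapping.keys m2 \<subseteq> Gf ` B"
    and eq: "sig m1 = sig m2"
  shows "m1 = m2"
proof -
  define K where "K = Poly_Mapping.keys m1 \<union> Poly_Mapping.keys m2"
  have K: "finite K" "K \<subseteq> Gf ` B" unfolding K_def using m1 m2 by auto
  have sK: "sig m = (\<Sum>v\<in>K. of_nat (Poly_Mapping.lookup m v) * inv Gf v)"
    if "Poly_Mapping.keys m \<subseteq> K" for m
    unfolding sig_def by (rule sum.mono_neutral_left) (use K that in \<open>auto simp: in_keys_iff\<close>)
  define u where "u b = (of_nat (Poly_Mapping.lookup m1 (Gf b)) - of_nat (Poly_Mapping.lookup m2 (Gf b)) :: rat)" for b
  have invK: "Gf (inv Gf v) = v" if "v \<in> K" for v using K that by (auto simp: Gf_inj inv_f_f)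
  have inj: "inj_on (inv Gf) K" using invK by (metis inj_onI)
  have "0 = sig m1 - sig m2" using eq by simp
  also have "\<dots> = (\<Sum>v\<in>K. (of_nat (Poly_Mapping.lookup m1 v) - of_nat (Poly_Mapping.lookup m2 v)) * inv Gf v)"
    using sK[of m1] sK[of m2] unfolding K_def by (simp add: sum_subtractf algebra_simps)
  also have "\<dots> = (\<Sum>v\<in>K. of_rat (u (inv Gf v)) * inv Gf v)"
    by (rule sum.cong[OF refl]) (simp add: u_def invK of_rat_diff)
  also have "\<dots> = (\<Sum>b\<in>inv Gf ` K. of_rat (u b) * b)"
    by (rule sum.reindex[OF inj, symmetric, unfolded o_def])
  finally have z: "(\<Sum>b\<in>inv Gf ` K. of_rat (u b) * b) = 0" by simp
  have TB: "inv Gf ` K \<subseteq> B" using K by (auto simp: Gf_inj inv_f_f)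
  have "Poly_Mapping.lookup m1 v = Poly_Mapping.lookup m2 v" for v
  proof (cases "v \<in> K")
    case True
    then have "u (inv Gf v) = 0" using ind K(1) TB z by blast
    then show ?thesis using invK[OF True] unfolding u_def by simp
  next
    case False
    then show ?thesis unfolding K_def by (simp add: in_keys_iff)
  qed
  then show ?thesis by (rule poly_mapping_eqI)
qed




lemma indep_G:
  assumes ind: "\<forall>S u. finite S \<longrightarrow> S \<subseteq> B \<longrightarrow> (\<Sum>v\<in>S. of_rat (u v) * v) = 0 \<longrightarrow> (\<forall>v\<in>S. u v = 0)"
    and Bpos: "B \<subseteq> {0<..}"
  shows "alg_indep (Gf ` B)"
  unfolding alg_indep_def
proof (intro allI impI)
  fix P :: "((real \<Rightarrow> real \<Rightarrow> real) \<Rightarrow>\<^sub>0 nat) \<Rightarrow>\<^sub>0 real"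
  assume H: "P \<noteq> 0 \<and> Poly_Mapping.lookup P 0 = 0 \<and> (\<forall>m\<in>Poly_Mapping.keys P. Poly_Mapping.keys m \<subseteq> Gf ` B)"
  define KP where "KP = Poly_Mapping.keys P"
  have KP: "finite KP" "KP \<noteq> {}" "\<And>m. m \<in> KP \<Longrightarrow> Poly_Mapping.keys m \<subseteq> Gf ` B" "0 \<notin> KP"
    using H unfolding KP_def by (auto simp: in_keys_iff)
  have inj: "inj_on sig KP" using sig_inj[of B, OF ind] KP(3) by (meson inj_onI)
  define C where "C s = Poly_Mapping.lookup P (the_inv_into KP sig s)" for s
  have pe: "poly_eval P a t = (\<Sum>s\<in>sig ` KP. C s * exp (s * inverse t))"
    if "t \<in> {0..1}" "t \<notin> Sg a" for a t
  proof -
    have "poly_eval P a t = (\<Sum>m\<in>KP. Poly_Mapping.lookup P m * exp (sig m * inverse t))"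
      unfolding poly_eval_def KP_def[symmetric]
      by (rule sum.cong[OF refl]) (use KP(3) mono_G that in \<open>fastforce\<close>)
    also have "\<dots> = (\<Sum>s\<in>sig ` KP. C s * exp (s * inverse t))"
      unfolding sum.reindex[OF inj] o_def C_def using the_inv_into_f_f[OF inj] by simp
    finally show ?thesis .
  qed
  have pos: "sig ` KP \<subseteq> {0<..}"
    using sig_pos[OF _ Bpos] KP(3,4) by fastforce
  obtain m where m: "m \<in> KP" using KP(2) by blast
  have "C (sig m) \<noteq> 0" unfolding C_def using the_inv_into_f_f[OF inj m] m by (simp add: KP_def in_keys_iff)
  then have "\<exists>s\<in>sig ` KP. C s \<noteq> 0" using m by blast
  then obtain \<kappa> Y where kY: "\<kappa> > 0" "Y > 0" "\<And>y. y \<ge> Y \<Longrightarrow> \<kappa> * y \<le> \<bar>\<Sum>s\<in>sig ` KP. C s * exp (s * y)\<bar>"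
    using lead[OF finite_imageI[OF KP(1)] pos] by blast
  define y0 where "y0 = max Y 1"
  define t0 where "t0 = inverse y0"
  have t0: "t0 \<in> {0..1}" "inverse t0 = y0" unfolding t0_def y0_def by (auto simp: inverse_le_1_iff)
  have "t0 \<notin> Sg t0" by (simp add: Sg_def)
  then have "poly_eval P t0 t0 = (\<Sum>s\<in>sig ` KP. C s * exp (s * y0))" using pe[OF t0(1)] t0(2) by simp
  moreover have "\<kappa> * y0 > 0" using kY unfolding y0_def by simp
  moreover have "\<kappa> * y0 \<le> \<bar>\<Sum>s\<in>sig ` KP. C s * exp (s * y0)\<bar>" using kY(3) unfolding y0_def by simp
  ultimately have "poly_eval P t0 t0 \<noteq> 0" by auto
  then show "poly_eval P \<noteq> (\<lambda>a t. 0)" by auto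
qed

lemma nonzero_elem:
  assumes nonN: "\<forall>A. A \<subseteq> {0..1::real} \<and> A \<prec> (UNIV :: real set) \<longrightarrow> A \<in> null_sets lebesgue"
    and Bpos: "B \<subseteq> {0<..}" and F: "F \<in> gen_alg (Gf ` B)" and nz: "F \<noteq> (\<lambda>a t. 0)"
  shows "F \<in> ANM cidx - ND cidx"
proof -
  obtain xs where xs: "\<forall>p\<in>set xs. snd p > 0"
    "F = (\<lambda>a t. if t \<in> {0..1} \<and> t \<notin> Sg a then Esum xs (inverse t) else 0)"
    using gen_form[OF F Bpos] by blast
  have "\<not> (\<forall>y. Esum xs y = 0)"
  proof
    assume "\<forall>y. Esum xs y = 0"
    then have "F = (\<lambda>a t. 0)" using xs(2) by (auto intro!: ext)
    then show False using nz by simp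
  qed
  then obtain \<kappa> Y where kY: "\<kappa> > 0" "Y > 0" "\<And>y. y \<ge> Y \<Longrightarrow> \<kappa> * y \<le> \<bar>Esum xs y\<bar>"
    using Esum_dich[OF xs(1)] by blast
  define \<delta> where "\<delta> = min 1 (inverse Y)"
  have d: "0 < \<delta>" "\<delta> \<le> 1" unfolding \<delta>_def using kY by auto
  show ?thesis
  proof (rule mainM[OF nonN _ kY(1) d _ xs(2)])
    show "(\<lambda>t. Esum xs (inverse t)) \<in> borel_measurable lebesgue" by (rule bor_leb[OF Esum_meas])
    fix t assume t: "t \<in> {0<..\<delta>}"
    then have "t \<le> inverse Y" "t > 0" unfolding \<delta>_def by auto
    then have "Y \<le> inverse t" using kY(2)
      by (metis inverse_inverse_eq le_imp_inverse_le)
    then have "\<kappa> * inverse t \<le> \<bar>Esum xs (inverse t)\<bar>" by (rule kY(3))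
    then show "\<kappa> / t \<le> \<bar>Esum xs (inverse t)\<bar>" by (simp add: divide_inverse)
  qed
qed

theorem mainTheorem11:
  assumes nonN: "\<forall>A. A \<subseteq> {0..1::real} \<and> A \<prec> (UNIV :: real set) \<longrightarrow> A \<in> null_sets lebesgue"
  shows "strongly_algebrable (ANM cidx - ND cidx) (UNIV :: real set)"
proof -
  obtain B :: "real set" where B: "B \<subseteq> {0<..}" "(UNIV::real set) \<lesssim> B"
    "\<And>S u v. finite S \<Longrightarrow> S \<subseteq> B \<Longrightarrow> (\<Sum>v\<in>S. of_rat (u v) * v) = 0 \<Longrightarrow> v \<in> S \<Longrightarrow> u v = 0"
    using hamel by blast
  have B3: "\<forall>S u. finite S \<longrightarrow> S \<subseteq> B \<longrightarrow> (\<Sum>v\<in>S. of_rat (u v) * v) = 0 \<longrightarrow> (\<forall>v\<in>S. u v = 0)"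
    using B(3) by blast
  have "B \<approx> (UNIV::real set)" using B(2) by (simp add: lepoll_antisym subset_imp_lepoll)
  moreover have "Gf ` B \<approx> B"
    using Gf_inj unfolding eqpoll_def by (meson bij_betw_imageI bij_betw_the_inv_into inj_on_subset subset_UNIV)
  ultimately have card: "Gf ` B \<approx> (UNIV::real set)" using eqpoll_trans by blast
  have car: "Gf ` B \<subseteq> seq_carrier" unfolding seq_carrier_def Gf_def by auto
  show ?thesis
    unfolding strongly_algebrable_def
    using car card indep_G[of B, OF B3 B(1)] nonzero_elem[OF nonN B(1)] by blast
qed


end
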